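(* Let $G$ be a search game (as defined in the context) whose payoffs are ordinally consistent and solitary-search dominant, in which social value outweighs cost, and which admits a redundancy-free pure strategy profile. Then $G$ admits a pure Nash equilibrium $s$ that is cost-inclusive socially optimal, i.e., $U_{CI}(s)=\max_{s'\in S}U_{CI}(s')$.
   Context: A search game $G=(N,\Omega,\Pi,\mu,K,c,v)$ consists of: a finite set of players $N=\{1,\ldots,n\}$; a finite set $\Omega$ of locations; for each player $i$ a partition $\Pi_i$ of $\Omega$, with $\pi_i(\omega)$ the cell containing $\omega$; a common prior $\mu\in\Delta(\Omega)$ with $\mu(\pi_i)>0$ for every cell of every player, and $\mu(\omega|\pi_i)=\mu(\omega)/\mu(\pi_i)$ for $\omega\in\pi_i$; capacities $K_i\in\mathbb{N}$; costs $c_i:\{0,\ldots,K_i\}\to\mathbb{R}_{\ge0}$ with $c_i(0)=0$ and nondecreasing increments $c_i(k+1)-c_i(k)\ge c_i(k)-c_i(k-1)$; rewards $v_i^m(\omega)\ge0$ with $v_i^{m+1}(\omega)\le v_i^m(\omega)$; social values $v_{\mathfrak{s}}(\omega)\ge0$. A pure strategy $s_i$ assigns to each cell $\pi_i$ a subset $s_i(\pi_i)\subseteq\pi_i$ of size at most $K_i$; $S$ is the set of pure profiles. With $m_s(\omega)=\sum_{i}\mathbf{1}_{\omega\in s_i(\pi_i(\omega))}$, player $i$'s payoff is $u_i(s)=\sum_{\omega}\mu(\omega)\big[\mathbf{1}_{\omega\in s_i(\pi_i(\omega))}v_i^{m_s(\omega)}(\omega)-c_i(|s_i(\pi_i(\omega))|)\big]$;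 a pure Nash equilibrium is a pure profile from which no player gains by a unilateral deviation to another pure strategy. The cost-inclusive social payoff is $U_{CI}(s)=\sum_{\omega}\mu(\omega)\big[v_{\mathfrak{s}}(\omega)\mathbf{1}_{m_s(\omega)\ge1}-\sum_{i\in N}c_i(|s_i(\pi_i(\omega))|)\big]$. Payoffs are ordinally consistent if for every player $i$, cell $\pi_i$ and $\omega,\omega'\in\pi_i$: $\mu(\omega)v_i^1(\omega)<\mu(\omega')v_i^1(\omega')$ implies $\mu(\omega)v_{\mathfrak{s}}(\omega)\le\mu(\omega')v_{\mathfrak{s}}(\omega')$. Payoffs are solitary-search dominant if for every player $i$, cell $\pi_i$ and $\omega,\omega'\in\pi_i$: $\mu(\omega|\pi_i)v_i^1(\omega)\ge\mu(\omega'|\pi_i)v_i^2(\omega')$ and $\mu(\omega|\pi_i)v_i^1(\omega)\ge c_i(K_i)-c_i(K_i-1)$. Social value outweighs cost if $\mu(\omega)v_{\mathfrak{s}}(\omega)\ge\mu(\pi_i)\big(c_i(K_i)-c_i(K_i-1)\big)$ for every location $\omega$, player $i$ and cell $\pi_i\in\Pi_i$. A pure profile $s$ is redundancy-free if $|s_i(\pi_i)|=K_i$ for every cell $\pi_i$ of every player $i$, and $m_s(\omega)\le1$ for every $\omega\in\Omega$. *)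

theory Defs
  imports Complex_Main "HOL-Library.Disjoint_Sets"
begin

text \<open>P i is player i's partition of Om, mu the prior, K the capacities, c the costs,
  v i m w the reward v_i^m(w), vs the social value.  A pure profile is a function
  s :: 'p => 'w set => 'w set, where s i C is the set searched by i in cell C.\<close>

definition cell :: "('p \<Rightarrow> 'w set set) \<Rightarrow> 'p \<Rightarrow> 'w \<Rightarrow> 'w set" where
  "cell P i w = (THE C. C \<in> P i \<and> w \<in> C)"

definition cell_mass :: "('w \<Rightarrow> real) \<Rightarrow> 'w set \<Rightarrow> real" where
  "cell_mass mu C = (\<Sum>w\<in>C. mu w)"

definition search_game ::
  "'p set \<Rightarrow> 'w set \<Rightarrow> ('p \<Rightarrow> 'w set set) \<Rightarrow> ('w \<Rightarrow> real) \<Rightarrow> ('p \<Rightarrow> nat)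
   \<Rightarrow> ('p \<Rightarrow> nat \<Rightarrow> real) \<Rightarrow> ('p \<Rightarrow> nat \<Rightarrow> 'w \<Rightarrow> real) \<Rightarrow> ('w \<Rightarrow> real) \<Rightarrow> bool" where
  "search_game N Om P mu K c v vs \<longleftrightarrow>
     finite N \<and> N \<noteq> {} \<and> finite Om \<and>
     (\<forall>i\<in>N. partition_on Om (P i)) \<and>
     (\<forall>w\<in>Om. mu w \<ge> 0) \<and> (\<Sum>w\<in>Om. mu w) = 1 \<and>
     (\<forall>i\<in>N. \<forall>C\<in>P i. cell_mass mu C > 0) \<and>
     (\<forall>i\<in>N. K i \<ge> 1) \<and>
     (\<forall>i\<in>N. c i 0 = 0 \<and> (\<forall>k\<le>K i. c i k \<ge> 0) \<and>
        (\<forall>k. 1 \<le> k \<and> k < K i \<longrightarrow> c i (k + 1) - c i k \<ge> c i k - c i (k - 1))) \<and>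
     (\<forall>i\<in>N. \<forall>w\<in>Om. \<forall>m. 1 \<le> m \<and> m \<le> card N \<longrightarrow> v i m w \<ge> 0) \<and>
     (\<forall>i\<in>N. \<forall>w\<in>Om. \<forall>m. 1 \<le> m \<and> m < card N \<longrightarrow> v i (m + 1) w \<le> v i m w) \<and>
     (\<forall>w\<in>Om. vs w \<ge> 0)"

definition pure_strategy :: "('p \<Rightarrow> 'w set set) \<Rightarrow> ('p \<Rightarrow> nat) \<Rightarrow> 'p \<Rightarrow> ('w set \<Rightarrow> 'w set) \<Rightarrow> bool" where
  "pure_strategy P K i t \<longleftrightarrow>
     (\<forall>C\<in>P i. t C \<subseteq> C \<and> card (t C) \<le> K i) \<and> (\<forall>C. C \<notin> P i \<longrightarrow> t C = {})"

definition pure_profiles :: "'p set \<Rightarrow> ('p \<Rightarrow> 'w set set) \<Rightarrow> ('p \<Rightarrow> nat) \<Rightarrow> ('p \<Rightarrow> 'w set \<Rightarrow> 'w set) set" where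
  "pure_profiles N P K = {s. (\<forall>i\<in>N. pure_strategy P K i (s i)) \<and> (\<forall>i. i \<notin> N \<longrightarrow> s i = (\<lambda>_. {}))}"

definition searches :: "('p \<Rightarrow> 'w set set) \<Rightarrow> ('p \<Rightarrow> 'w set \<Rightarrow> 'w set) \<Rightarrow> 'p \<Rightarrow> 'w \<Rightarrow> bool" where
  "searches P s i w \<longleftrightarrow> w \<in> s i (cell P i w)"

definition num_searchers :: "'p set \<Rightarrow> ('p \<Rightarrow> 'w set set) \<Rightarrow> ('p \<Rightarrow> 'w set \<Rightarrow> 'w set) \<Rightarrow> 'w \<Rightarrow> nat" where
  "num_searchers N P s w = card {i\<in>N. searches P s i w}"

definition payoff ::
  "'p set \<Rightarrow> 'w set \<Rightarrow> ('p \<Rightarrow> 'w set set) \<Rightarrow> ('w \<Rightarrow> real) \<Rightarrow> ('p \<Rightarrow> nat \<Rightarrow> real)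
   \<Rightarrow> ('p \<Rightarrow> nat \<Rightarrow> 'w \<Rightarrow> real) \<Rightarrow> 'p \<Rightarrow> ('p \<Rightarrow> 'w set \<Rightarrow> 'w set) \<Rightarrow> real" where
  "payoff N Om P mu c v i s =
     (\<Sum>w\<in>Om. mu w * ((if searches P s i w then v i (num_searchers N P s w) w else 0)
                       - c i (card (s i (cell P i w)))))"

definition pure_nash ::
  "'p set \<Rightarrow> 'w set \<Rightarrow> ('p \<Rightarrow> 'w set set) \<Rightarrow> ('w \<Rightarrow> real) \<Rightarrow> ('p \<Rightarrow> nat) \<Rightarrow> ('p \<Rightarrow> nat \<Rightarrow> real)
   \<Rightarrow> ('p \<Rightarrow> nat \<Rightarrow> 'w \<Rightarrow> real) \<Rightarrow> ('p \<Rightarrow> 'w set \<Rightarrow> 'w set) \<Rightarrow> bool" where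
  "pure_nash N Om P mu K c v s \<longleftrightarrow>
     s \<in> pure_profiles N P K \<and>
     (\<forall>i\<in>N. \<forall>t. pure_strategy P K i t \<longrightarrow> payoff N Om P mu c v i (s(i := t)) \<le> payoff N Om P mu c v i s)"

definition U_CI ::
  "'p set \<Rightarrow> 'w set \<Rightarrow> ('p \<Rightarrow> 'w set set) \<Rightarrow> ('w \<Rightarrow> real) \<Rightarrow> ('p \<Rightarrow> nat \<Rightarrow> real)
   \<Rightarrow> ('w \<Rightarrow> real) \<Rightarrow> ('p \<Rightarrow> 'w set \<Rightarrow> 'w set) \<Rightarrow> real" where
  "U_CI N Om P mu c vs s =
     (\<Sum>w\<in>Om. mu w * ((if num_searchers N P s w \<ge> 1 then vs w else 0)
                       - (\<Sum>i\<in>N. c i (card (s i (cell P i w))))))"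

definition ordinally_consistent ::
  "'p set \<Rightarrow> ('p \<Rightarrow> 'w set set) \<Rightarrow> ('w \<Rightarrow> real) \<Rightarrow> ('p \<Rightarrow> nat \<Rightarrow> 'w \<Rightarrow> real) \<Rightarrow> ('w \<Rightarrow> real) \<Rightarrow> bool" where
  "ordinally_consistent N P mu v vs \<longleftrightarrow>
     (\<forall>i\<in>N. \<forall>C\<in>P i. \<forall>w\<in>C. \<forall>w'\<in>C.
        mu w * v i 1 w < mu w' * v i 1 w' \<longrightarrow> mu w * vs w \<le> mu w' * vs w')"

definition solitary_search_dominant ::
  "'p set \<Rightarrow> ('p \<Rightarrow> 'w set set) \<Rightarrow> ('w \<Rightarrow> real) \<Rightarrow> ('p \<Rightarrow> nat) \<Rightarrow> ('p \<Rightarrow> nat \<Rightarrow> real)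
   \<Rightarrow> ('p \<Rightarrow> nat \<Rightarrow> 'w \<Rightarrow> real) \<Rightarrow> bool" where
  "solitary_search_dominant N P mu K c v \<longleftrightarrow>
     (\<forall>i\<in>N. \<forall>C\<in>P i. \<forall>w\<in>C. \<forall>w'\<in>C.
        mu w / cell_mass mu C * v i 1 w \<ge> mu w' / cell_mass mu C * v i 2 w' \<and>
        mu w / cell_mass mu C * v i 1 w \<ge> c i (K i) - c i (K i - 1))"

definition social_value_outweighs_cost ::
  "'p set \<Rightarrow> 'w set \<Rightarrow> ('p \<Rightarrow> 'w set set) \<Rightarrow> ('w \<Rightarrow> real) \<Rightarrow> ('p \<Rightarrow> nat) \<Rightarrow> ('p \<Rightarrow> nat \<Rightarrow> real)
   \<Rightarrow> ('w \<Rightarrow> real) \<Rightarrow> bool" where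
  "social_value_outweighs_cost N Om P mu K c vs \<longleftrightarrow>
     (\<forall>w\<in>Om. \<forall>i\<in>N. \<forall>C\<in>P i. mu w * vs w \<ge> cell_mass mu C * (c i (K i) - c i (K i - 1)))"

definition redundancy_free ::
  "'p set \<Rightarrow> 'w set \<Rightarrow> ('p \<Rightarrow> 'w set set) \<Rightarrow> ('p \<Rightarrow> nat) \<Rightarrow> ('p \<Rightarrow> 'w set \<Rightarrow> 'w set) \<Rightarrow> bool" where
  "redundancy_free N Om P K s \<longleftrightarrow>
     s \<in> pure_profiles N P K \<and>
     (\<forall>i\<in>N. \<forall>C\<in>P i. card (s i C) = K i) \<and>
     (\<forall>w\<in>Om. num_searchers N P s w \<le> 1)"

end

theory Submission
  imports Defs
begin


lemma max_exists:
  fixes f :: "'a \<Rightarrow> real"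
  assumes "finite A" "A \<noteq> {}"
  shows "\<exists>x\<in>A. \<forall>y\<in>A. f y \<le> f x"
proof -
  have "Max (f ` A) \<in> f ` A" using assms by simp
  then obtain x where x: "x \<in> A" "f x = Max (f ` A)" by auto
  show ?thesis using x assms by (metis Max_ge finite_imageI image_eqI)
qed

locale sgame =
  fixes N :: "'p set" and Om :: "'w set" and P :: "'p \<Rightarrow> 'w set set"
    and mu :: "'w \<Rightarrow> real" and K :: "'p \<Rightarrow> nat" and c :: "'p \<Rightarrow> nat \<Rightarrow> real"
    and v :: "'p \<Rightarrow> nat \<Rightarrow> 'w \<Rightarrow> real" and vs :: "'w \<Rightarrow> real"
  assumes SG: "search_game N Om P mu K c v vs"
begin

lemma finN: "finite N" using SG by (simp add: search_game_def)
lemma finOm: "finite Om" using SG by (simp add: search_game_def)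
lemma part: "i \<in> N \<Longrightarrow> partition_on Om (P i)" using SG by (simp add: search_game_def)
lemma mu_nn: "w \<in> Om \<Longrightarrow> mu w \<ge> 0" using SG by (simp add: search_game_def)
lemma mass_pos: "i \<in> N \<Longrightarrow> C \<in> P i \<Longrightarrow> cell_mass mu C > 0" using SG by (simp add: search_game_def)
lemma K_pos: "i \<in> N \<Longrightarrow> K i \<ge> 1" using SG by (simp add: search_game_def)
lemma c0: "i \<in> N \<Longrightarrow> c i 0 = 0" using SG by (simp add: search_game_def)
lemma c_nn: "i \<in> N \<Longrightarrow> k \<le> K i \<Longrightarrow> c i k \<ge> 0" using SG by (simp add: search_game_def)
lemma c_conv: "i \<in> N \<Longrightarrow> 1 \<le> k \<Longrightarrow> k < K i \<Longrightarrow> c i (k + 1) - c i k \<ge> c i k - c i (k - 1)"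
  using SG by (simp add: search_game_def)

lemma cell_sub: "i \<in> N \<Longrightarrow> C \<in> P i \<Longrightarrow> C \<subseteq> Om"
  using part partition_onD1 by fastforce

lemma cell_fin: "i \<in> N \<Longrightarrow> C \<in> P i \<Longrightarrow> finite C"
  using cell_sub finOm finite_subset by blast

lemma finP: "i \<in> N \<Longrightarrow> finite (P i)"
  using finite_elements finOm part by blast

lemma cell_eq: assumes "i \<in> N" "C \<in> P i" "w \<in> C" shows "cell P i w = C"
  unfolding cell_def
proof (rule the_equality)
  show "C \<in> P i \<and> w \<in> C" using assms by simp
  fix D assume "D \<in> P i \<and> w \<in> D"
  then show "D = C" using part[OF assms(1)] assms unfolding partition_on_def disjoint_def by blast
qed

lemma cell_in: assumes "i \<in> N" "w \<in> Om" shows "cell P i w \<in> P i" "w \<in> cell P i w"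
proof -
  obtain C where "C \<in> P i" "w \<in> C" using part[OF assms(1)] assms(2) partition_onD1 by fastforce
  then show "cell P i w \<in> P i" "w \<in> cell P i w" using cell_eq assms by auto
qed

lemma cell_iff: "i \<in> N \<Longrightarrow> C \<in> P i \<Longrightarrow> w \<in> Om \<Longrightarrow> cell P i w = C \<longleftrightarrow> w \<in> C"
  using cell_eq cell_in by blast

lemma sum_cells: assumes "i \<in> N" shows "(\<Sum>w\<in>Om. f w) = (\<Sum>C\<in>P i. \<Sum>w\<in>C. f w)"
proof -
  have "Om = \<Union>(P i)" using part[OF assms] partition_onD1 by auto
  then have "(\<Sum>w\<in>Om. f w) = sum f (\<Union>(P i))" by simp
  also have "\<dots> = (\<Sum>C\<in>P i. \<Sum>w\<in>C. f w)"
    using sum.Union_disjoint[of "P i" f] cell_fin[OF assms] part[OF assms]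
    unfolding partition_on_def disjoint_def by (auto simp: comp_def)
  finally show ?thesis .
qed

abbreviation PP where "PP \<equiv> pure_profiles N P K"

lemma pp_sub: "s \<in> PP \<Longrightarrow> i \<in> N \<Longrightarrow> C \<in> P i \<Longrightarrow> s i C \<subseteq> C"
  by (simp add: pure_profiles_def pure_strategy_def)
lemma pp_card: "s \<in> PP \<Longrightarrow> i \<in> N \<Longrightarrow> C \<in> P i \<Longrightarrow> card (s i C) \<le> K i"
  by (simp add: pure_profiles_def pure_strategy_def)
lemma pp_fin: "s \<in> PP \<Longrightarrow> i \<in> N \<Longrightarrow> C \<in> P i \<Longrightarrow> finite (s i C)"
  by (rule finite_subset[OF pp_sub cell_fin])

lemma pp_upd: assumes "s \<in> PP" "i \<in> N" "C \<in> P i" "X \<subseteq> C" "card X \<le> K i"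
  shows "s(i := (s i)(C := X)) \<in> PP"
  using assms unfolding pure_profiles_def pure_strategy_def by auto

lemma searches_upd: assumes "i \<in> N" "C \<in> P i" "x \<in> Om"
  shows "searches P (s(i := (s i)(C := X))) j x \<longleftrightarrow> (if j = i \<and> x \<in> C then x \<in> X else searches P s j x)"
  using cell_iff[OF assms] unfolding searches_def by auto

lemma searches_cell: "i \<in> N \<Longrightarrow> C \<in> P i \<Longrightarrow> x \<in> C \<Longrightarrow> searches P s i x \<longleftrightarrow> x \<in> s i C"
  using cell_eq unfolding searches_def by auto

lemma finite_PP: "finite PP"
proof -
  define F where "F = {f :: 'w set \<Rightarrow> 'w set. \<forall>C. (C \<in> Pow Om \<longrightarrow> f C \<in> Pow Om) \<and> (C \<notin> Pow Om \<longrightarrow> f C = {})}"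
  have fF: "finite F" unfolding F_def by (rule finite_set_of_finite_funs) (use finOm in auto)
  have "finite {s :: 'p \<Rightarrow> 'w set \<Rightarrow> 'w set. \<forall>x. (x \<in> N \<longrightarrow> s x \<in> F) \<and> (x \<notin> N \<longrightarrow> s x = (\<lambda>_. {}))}"
    by (rule finite_set_of_finite_funs) (use fF finN in auto)
  moreover have "PP \<subseteq> {s. \<forall>x. (x \<in> N \<longrightarrow> s x \<in> F) \<and> (x \<notin> N \<longrightarrow> s x = (\<lambda>_. {}))}"
  proof
    fix s assume s: "s \<in> PP"
    have "s x \<in> F" if "x \<in> N" for x
      unfolding F_def mem_Collect_eq
    proof (intro allI conjI impI)
      fix C assume "C \<in> Pow Om"
      show "s x C \<in> Pow Om"
      proof (cases "C \<in> P x")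
        case True then show ?thesis using pp_sub[OF s that True] cell_sub[OF that True] by auto
      next
        case False then show ?thesis using s that by (simp add: pure_profiles_def pure_strategy_def)
      qed
    next
      fix C assume "C \<notin> Pow Om"
      then have "C \<notin> P x" using cell_sub[OF that] by auto
      then show "s x C = {}" using s that by (simp add: pure_profiles_def pure_strategy_def)
    qed
    then show "s \<in> {s. \<forall>x. (x \<in> N \<longrightarrow> s x \<in> F) \<and> (x \<notin> N \<longrightarrow> s x = (\<lambda>_. {}))}"
      using s by (auto simp: pure_profiles_def)
  qed
  ultimately show ?thesis using finite_subset by blast
qed


lemma c_mono: assumes "i \<in> N" shows "k < K i \<Longrightarrow> 0 \<le> c i (Suc k) - c i k"
proof (induction k)
  case 0 then show ?case using c0[OF assms] c_nn[OF assms, of 1] by simp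
next
  case (Suc k)
  then have "c i (Suc k + 1) - c i (Suc k) \<ge> c i (Suc k) - c i (Suc k - 1)"
    using c_conv[OF assms, of "Suc k"] by simp
  then show ?case using Suc by simp
qed

lemma c_marg_aux: assumes "i \<in> N" shows "k + d + 1 = K i \<Longrightarrow> c i (Suc k) - c i k \<le> c i (K i) - c i (K i - 1)"
proof (induction d arbitrary: k)
  case 0
  then have "K i = Suc k" by simp
  then show ?case by simp
next
  case (Suc d)
  have "c i (Suc k + 1) - c i (Suc k) \<ge> c i (Suc k) - c i (Suc k - 1)"
    using c_conv[OF assms, of "Suc k"] Suc.prems by simp
  moreover have "c i (Suc (Suc k)) - c i (Suc k) \<le> c i (K i) - c i (K i - 1)"
    using Suc.IH[of "Suc k"] Suc.prems by simp
  ultimately show ?case by simp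
qed

lemma c_marg: "i \<in> N \<Longrightarrow> k < K i \<Longrightarrow> c i (Suc k) - c i k \<le> c i (K i) - c i (K i - 1)"
  using c_marg_aux[of i k "K i - k - 1"] by simp

lemma c_tot_aux: assumes "i \<in> N" shows "k + d = K i \<Longrightarrow> c i (K i) - c i k \<le> real d * (c i (K i) - c i (K i - 1))"
proof (induction d arbitrary: k)
  case 0 then show ?case by simp
next
  case (Suc d)
  have "c i (K i) - c i (Suc k) \<le> real d * (c i (K i) - c i (K i - 1))"
    using Suc.IH[of "Suc k"] Suc.prems by simp
  moreover have "c i (Suc k) - c i k \<le> c i (K i) - c i (K i - 1)"
    using c_marg[OF assms, of k] Suc.prems by simp
  ultimately show ?case by (simp add: algebra_simps)
qed

lemma c_tot: "i \<in> N \<Longrightarrow> k \<le> K i \<Longrightarrow> c i (K i) - c i k \<le> real (K i - k) * (c i (K i) - c i (K i - 1))"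
  using c_tot_aux[of i k "K i - k"] by simp

definition cov where "cov s = {w\<in>Om. \<exists>j\<in>N. searches P s j w}"
definition nonred where "nonred s \<longleftrightarrow> (\<forall>w\<in>Om. \<forall>j\<in>N. \<forall>k\<in>N. searches P s j w \<longrightarrow> searches P s k w \<longrightarrow> j = k)"
definition cost where "cost s = (\<Sum>w\<in>Om. mu w * (\<Sum>j\<in>N. c j (card (s j (cell P j w)))))"

lemma num_ge1: "num_searchers N P s w \<ge> 1 \<longleftrightarrow> (\<exists>j\<in>N. searches P s j w)"
  unfolding num_searchers_def using finN by (auto simp: card_gt_0_iff Suc_le_eq)

lemma num_le1: "num_searchers N P s w \<le> 1 \<longleftrightarrow> (\<forall>j\<in>N. \<forall>k\<in>N. searches P s j w \<longrightarrow> searches P s k w \<longrightarrow> j = k)"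
  unfolding num_searchers_def using finN by (auto simp: card_le_Suc0_iff_eq)

lemma rf_iff: "redundancy_free N Om P K s \<longleftrightarrow> s \<in> PP \<and> (\<forall>i\<in>N. \<forall>C\<in>P i. card (s i C) = K i) \<and> nonred s"
  unfolding redundancy_free_def nonred_def using num_le1 by auto

lemma U_eq: "U_CI N Om P mu c vs s = (\<Sum>w\<in>cov s. mu w * vs w) - cost s"
proof -
  have "U_CI N Om P mu c vs s = (\<Sum>w\<in>Om. (if w \<in> cov s then mu w * vs w else 0) - mu w * (\<Sum>j\<in>N. c j (card (s j (cell P j w)))))"
    unfolding U_CI_def
  proof (rule sum.cong)
    fix x assume x: "x \<in> Om"
    have "(1 \<le> num_searchers N P s x) = (x \<in> cov s)" using num_ge1 x by (simp add: cov_def)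
    then show "mu x * ((if 1 \<le> num_searchers N P s x then vs x else 0) - (\<Sum>i\<in>N. c i (card (s i (cell P i x))))) =
       (if x \<in> cov s then mu x * vs x else 0) - mu x * (\<Sum>j\<in>N. c j (card (s j (cell P j x))))"
      by (simp add: right_diff_distrib)
  qed simp
  also have "\<dots> = (\<Sum>w\<in>Om. if w \<in> cov s then mu w * vs w else 0) - cost s"
    unfolding cost_def by (simp add: sum_subtractf)
  also have "(\<Sum>w\<in>Om. if w \<in> cov s then mu w * vs w else 0) = (\<Sum>w\<in>cov s. mu w * vs w)"
  proof -
    have "Om \<inter> cov s = cov s" by (auto simp: cov_def)
    then show ?thesis using finOm by (simp add: sum.If_cases)
  qed
  finally show ?thesis .
qed

lemma cost_change:
  assumes i: "i \<in> N" and C: "C \<in> P i"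
    and eq: "\<forall>j\<in>N. \<forall>D\<in>P j. (j,D) \<noteq> (i,C) \<longrightarrow> card (s' j D) = card (s j D)"
  shows "cost s' = cost s + cell_mass mu C * (c i (card (s' i C)) - c i (card (s i C)))"
proof -
  define d where "d = c i (card (s' i C)) - c i (card (s i C))"
  have inner: "(\<Sum>j\<in>N. c j (card (s' j (cell P j w)))) = (\<Sum>j\<in>N. c j (card (s j (cell P j w)))) + (if w \<in> C then d else 0)"
    if w: "w \<in> Om" for w
  proof -
    have "(\<Sum>j\<in>N. c j (card (s' j (cell P j w)))) = (\<Sum>j\<in>N. c j (card (s j (cell P j w))) + (if j = i then (if w \<in> C then d else 0) else 0))"
    proof (rule sum.cong)
      fix j assume j: "j \<in> N"
      show "c j (card (s' j (cell P j w))) = c j (card (s j (cell P j w))) + (if j = i then (if w \<in> C then d else 0) else 0)"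
      proof (cases "j = i \<and> w \<in> C")
        case True then show ?thesis by (simp add: cell_eq[OF i C] d_def)
      next
        case False
        then have "(j, cell P j w) \<noteq> (i, C)" using cell_in[OF j w] by auto
        then have "card (s' j (cell P j w)) = card (s j (cell P j w))" using eq cell_in[OF j w] j by blast
        then show ?thesis using False by auto
      qed
    qed simp
    also have "\<dots> = (\<Sum>j\<in>N. c j (card (s j (cell P j w)))) + (if w \<in> C then d else 0)"
      using i finN by (simp add: sum.distrib)
    finally show ?thesis .
  qed
  have "cost s' = (\<Sum>w\<in>Om. mu w * (\<Sum>j\<in>N. c j (card (s j (cell P j w)))) + (if w \<in> C then mu w * d else 0))"
    unfolding cost_def by (rule sum.cong) (auto simp: inner distrib_left)
  also have "\<dots> = cost s + (\<Sum>w\<in>Om. if w \<in> C then mu w * d else 0)"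
    unfolding cost_def by (simp add: sum.distrib)
  also have "(\<Sum>w\<in>Om. if w \<in> C then mu w * d else 0) = (\<Sum>w\<in>C. mu w * d)"
  proof -
    have "Om \<inter> C = C" using cell_sub[OF i C] by blast
    then show ?thesis using finOm by (simp add: sum.If_cases)
  qed
  also have "\<dots> = cell_mass mu C * d" by (simp add: cell_mass_def sum_distrib_right)
  finally show ?thesis by (simp add: d_def)
qed

lemma dsum:
  fixes f f' :: "'p \<Rightarrow> 'w set \<Rightarrow> 'a::comm_monoid_add"
  assumes i: "i \<in> N" and C: "C \<in> P i"
    and eq: "\<forall>j\<in>N. \<forall>D\<in>P j. (j,D) \<noteq> (i,C) \<longrightarrow> f' j D = f j D"
  shows "(\<Sum>j\<in>N. \<Sum>D\<in>P j. f' j D) + f i C = (\<Sum>j\<in>N. \<Sum>D\<in>P j. f j D) + f' i C"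
proof -
  have A: "(\<Sum>j\<in>N. \<Sum>D\<in>P j. g j D) = (\<Sum>D\<in>P i. g i D) + (\<Sum>j\<in>N-{i}. \<Sum>D\<in>P j. g j D)" for g :: "'p \<Rightarrow> 'w set \<Rightarrow> 'a"
    by (rule sum.remove[OF finN i])
  have B: "(\<Sum>D\<in>P i. g D) = g C + (\<Sum>D\<in>P i-{C}. g D)" for g :: "'w set \<Rightarrow> 'a"
    by (rule sum.remove[OF finP[OF i] C])
  have E1: "(\<Sum>j\<in>N-{i}. \<Sum>D\<in>P j. f' j D) = (\<Sum>j\<in>N-{i}. \<Sum>D\<in>P j. f j D)"
    using eq by (intro sum.cong refl) auto
  have E2: "(\<Sum>D\<in>P i-{C}. f' i D) = (\<Sum>D\<in>P i-{C}. f i D)"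
    using eq i by (intro sum.cong refl) auto
  show ?thesis unfolding A B E1 E2 by (simp add: add_ac)
qed

end


context sgame
begin

abbreviation U where "U s \<equiv> U_CI N Om P mu c vs s"

definition Srch where "Srch s = {(j,w)\<in>N \<times> Om. searches P s j w}"

lemma searches_cov: "w \<in> Om \<Longrightarrow> j \<in> N \<Longrightarrow> searches P s j w \<Longrightarrow> w \<in> cov s"
  by (auto simp: cov_def)

lemma reduce: "s \<in> PP \<Longrightarrow> \<exists>s'\<in>PP. nonred s' \<and> U s \<le> U s'"
proof (induction "card (Srch s)" arbitrary: s rule: less_induct)
  case less
  show ?case
  proof (cases "nonred s")
    case True then show ?thesis using less.prems by auto
  next
    case False
    then obtain w j k where w: "w \<in> Om" and j: "j \<in> N" and k: "k \<in> N"
      and sj: "searches P s j w" and sk: "searches P s k w" and jk: "j \<noteq> k"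
      unfolding nonred_def by blast
    define D where "D = cell P j w"
    have D: "D \<in> P j" "w \<in> D" using cell_in[OF j w] by (auto simp: D_def)
    have wsD: "w \<in> s j D" using sj by (simp add: searches_def D_def)
    have fin: "finite (s j D)" by (rule pp_fin[OF less.prems j D(1)])
    define s' where "s' = s(j := (s j)(D := s j D - {w}))"
    have s'PP: "s' \<in> PP" unfolding s'_def
      apply (rule pp_upd[OF less.prems j D(1)])
      using pp_sub[OF less.prems j D(1)] pp_card[OF less.prems j D(1)] card_Diff1_le[of "s j D" w] fin
      by auto
    have srch: "searches P s' l x \<longleftrightarrow> searches P s l x \<and> \<not> (l = j \<and> x = w)" if x: "x \<in> Om" for l x
      unfolding s'_def using searches_upd[OF j D(1) x, of s "s j D - {w}" l] searches_cell[OF j D(1), of x s] D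
      by auto
    have cov: "cov s' = cov s"
      using srch sk jk k w unfolding cov_def by fastforce
    have cardD: "card (s' j D) = card (s j D) - 1" using wsD fin by (simp add: s'_def)
    have cpos: "card (s j D) \<ge> 1" using wsD fin card_0_eq[OF fin] by fastforce
    have cle: "card (s j D) \<le> K j" by (rule pp_card[OF less.prems j D(1)])
    have eq: "\<forall>l\<in>N. \<forall>E\<in>P l. (l,E) \<noteq> (j,D) \<longrightarrow> card (s' l E) = card (s l E)"
      by (auto simp: s'_def)
    have cost: "cost s' = cost s + cell_mass mu D * (c j (card (s j D) - 1) - c j (card (s j D)))"
      using cost_change[OF j D(1) eq] cardD by simp
    have "0 \<le> c j (Suc (card (s j D) - 1)) - c j (card (s j D) - 1)"
      using c_mono[OF j, of "card (s j D) - 1"] cpos cle by simp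
    then have "c j (card (s j D) - 1) - c j (card (s j D)) \<le> 0" using cpos by simp
    moreover have "cell_mass mu D \<ge> 0" using mass_pos[OF j D(1)] by simp
    ultimately have "cost s' \<le> cost s" using cost by (simp add: mult_nonneg_nonpos)
    then have U1: "U s \<le> U s'" by (simp add: U_eq cov)
    have a1: "(j,w) \<in> Srch s" using w j sj by (simp add: Srch_def)
    have a2: "(j,w) \<notin> Srch s'" using srch[OF w] by (simp add: Srch_def)
    have a3: "Srch s' \<subseteq> Srch s" using srch by (auto simp: Srch_def)
    have "Srch s' \<subset> Srch s" using a1 a2 a3 by blast
    then have "card (Srch s') < card (Srch s)"
      by (rule psubset_card_mono[rotated]) (auto simp: Srch_def intro: finite_subset[OF _ finite_cartesian_product[OF finN finOm]])
    from less.hyps[OF this s'PP] U1 show ?thesis by auto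
  qed
qed

end


context sgame
begin

definition Dm where "Dm r s = {(j,w)\<in>N \<times> Om. searches P r j w \<and> \<not> searches P s j w}"

lemma augment:
  assumes r: "redundancy_free N Om P K r"
  shows "s \<in> PP \<Longrightarrow> nonred s \<Longrightarrow> i \<in> N \<Longrightarrow> C \<in> P i \<Longrightarrow> card (s i C) < K i \<Longrightarrow>
    \<exists>s'\<in>PP. nonred s' \<and> card (s' i C) = Suc (card (s i C)) \<and>
      (\<forall>j\<in>N. \<forall>D\<in>P j. (j,D) \<noteq> (i,C) \<longrightarrow> card (s' j D) = card (s j D)) \<and>
      (\<exists>w\<in>Om. w \<notin> cov s \<and> cov s' = insert w (cov s))"
proof (induction "card (Dm r s)" arbitrary: s i C rule: less_induct)
  case (less s i C)
  note sPP = less.prems(1) and nr = less.prems(2) and i = less.prems(3) and C = less.prems(4)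
    and lt = less.prems(5)
  have rPP: "r \<in> PP" and rK: "card (r i C) = K i" and rnr: "nonred r"
    using r i C by (auto simp: rf_iff)
  have fin: "finite (s i C)" by (rule pp_fin[OF sPP i C])
  have finr: "finite (r i C)" by (rule pp_fin[OF rPP i C])
  have "\<not> r i C \<subseteq> s i C"
  proof
    assume "r i C \<subseteq> s i C"
    then have "card (r i C) \<le> card (s i C)" by (rule card_mono[OF fin])
    then show False using lt rK by simp
  qed
  then obtain w where wr: "w \<in> r i C" and ws: "w \<notin> s i C" by blast
  have wC: "w \<in> C" using pp_sub[OF rPP i C] wr by blast
  have wOm: "w \<in> Om" using cell_sub[OF i C] wC by blast
  have sub: "insert w (s i C) \<subseteq> C" using pp_sub[OF sPP i C] wC by blast
  have cins: "card (insert w (s i C)) = Suc (card (s i C))" using fin ws by simp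
  define s1 where "s1 = s(i := (s i)(C := insert w (s i C)))"
  have s1PP: "s1 \<in> PP" unfolding s1_def
    by (rule pp_upd[OF sPP i C sub]) (use cins lt in simp)
  have srch1: "searches P s1 l x \<longleftrightarrow> searches P s l x \<or> (l = i \<and> x = w)" if x: "x \<in> Om" for l x
    unfolding s1_def using searches_upd[OF i C x, of s "insert w (s i C)" l] searches_cell[OF i C, of x s] wC
    by auto
  show ?case
  proof (cases "w \<in> cov s")
    case False
    have nw: "\<And>l. l \<in> N \<Longrightarrow> \<not> searches P s l w" using False wOm by (auto simp: cov_def)
    have "nonred s1" unfolding nonred_def
    proof (intro ballI impI)
      fix x l1 l2 assume x: "x \<in> Om" and l: "l1 \<in> N" "l2 \<in> N" and a: "searches P s1 l1 x" "searches P s1 l2 x"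
      show "l1 = l2"
      proof (cases "x = w")
        case True then show ?thesis using a srch1[OF x] nw l by auto
      next
        case False then show ?thesis using a srch1[OF x] nr x l unfolding nonred_def by auto
      qed
    qed
    moreover have "card (s1 i C) = Suc (card (s i C))" using cins by (simp add: s1_def)
    moreover have "\<forall>j\<in>N. \<forall>D\<in>P j. (j,D) \<noteq> (i,C) \<longrightarrow> card (s1 j D) = card (s j D)"
      by (auto simp: s1_def)
    moreover have "cov s1 = insert w (cov s)"
      using srch1 wOm i unfolding cov_def by auto
    ultimately show ?thesis using s1PP False wOm by blast
  next
    case True
    then obtain j where j: "j \<in> N" and sj: "searches P s j w" by (auto simp: cov_def)
    have ij: "j \<noteq> i" using sj ws searches_cell[OF i C wC, of s] by auto
    define D where "D = cell P j w"
    have D: "D \<in> P j" "w \<in> D" using cell_in[OF j wOm] by (auto simp: D_def)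
    have wsD: "w \<in> s j D" using sj by (simp add: searches_def D_def)
    have finD: "finite (s j D)" by (rule pp_fin[OF sPP j D(1)])
    have s1j: "s1 j = s j" using ij by (simp add: s1_def)
    define s2 where "s2 = s1(j := (s1 j)(D := s1 j D - {w}))"
    have s2PP: "s2 \<in> PP" unfolding s2_def
      apply (rule pp_upd[OF s1PP j D(1)])
      using pp_sub[OF sPP j D(1)] pp_card[OF sPP j D(1)] card_Diff1_le[of "s j D" w] finD s1j
      by auto
    have srch2: "searches P s2 l x \<longleftrightarrow> (searches P s l x \<and> \<not> (l = j \<and> x = w)) \<or> (l = i \<and> x = w)"
      if x: "x \<in> Om" for l x
      unfolding s2_def using searches_upd[OF j D(1) x, of s1 "s1 j D - {w}" l] searches_cell[OF j D(1), of x s1] D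
        srch1[OF x, of l] ij s1j by auto
    have nr2: "nonred s2"
      unfolding nonred_def
    proof (intro ballI impI)
      fix x l1 l2 assume x: "x \<in> Om" and l: "l1 \<in> N" "l2 \<in> N" and a: "searches P s2 l1 x" "searches P s2 l2 x"
      show "l1 = l2"
      proof (cases "x = w")
        case True
        have "\<And>l. l \<in> N \<Longrightarrow> searches P s l w \<Longrightarrow> l = j" using nr sj j wOm unfolding nonred_def by blast
        then show ?thesis using a True srch2[OF x] l ij by fastforce
      next
        case False then show ?thesis using a srch2[OF x] nr x l unfolding nonred_def by auto
      qed
    qed
    have cov2: "cov s2 = cov s"
    proof (rule set_eqI)
      fix x show "x \<in> cov s2 \<longleftrightarrow> x \<in> cov s"
      proof (cases "x \<in> Om")
        case xO: True
        show ?thesis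
        proof (cases "x = w")
          case True then show ?thesis using srch2[OF wOm] i j sj wOm by (auto simp: cov_def)
        next
          case False then show ?thesis using srch2[OF xO] xO by (auto simp: cov_def)
        qed
      qed (auto simp: cov_def)
    qed
    have c2i: "card (s2 i C) = Suc (card (s i C))" using cins ij by (simp add: s2_def s1_def)
    have c2j: "card (s2 j D) = card (s j D) - 1" using wsD finD s1j by (simp add: s2_def)
    have cpos: "card (s j D) \<ge> 1" using wsD finD card_0_eq[OF finD] by fastforce
    have cle: "card (s j D) \<le> K j" by (rule pp_card[OF sPP j D(1)])
    have c2o: "card (s2 l E) = card (s l E)" if "(l,E) \<noteq> (i,C)" "(l,E) \<noteq> (j,D)" for l E
      using that by (auto simp: s2_def s1_def)
    have lt2: "card (s2 j D) < K j" using c2j cpos cle by simp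
    have a1: "(i,w) \<in> Dm r s" using i wOm wr ws searches_cell[OF i C wC] by (simp add: Dm_def)
    have a2: "(i,w) \<notin> Dm r s2" using srch2[OF wOm] by (simp add: Dm_def)
    have rj: "\<not> searches P r j w"
      using rnr wOm i j ij searches_cell[OF i C wC, of r] wr unfolding nonred_def by blast
    have a3: "Dm r s2 \<subseteq> Dm r s" using srch2 rj by (auto simp: Dm_def)
    have "Dm r s2 \<subset> Dm r s" using a1 a2 a3 by blast
    then have "card (Dm r s2) < card (Dm r s)"
      by (rule psubset_card_mono[rotated]) (auto simp: Dm_def intro: finite_subset[OF _ finite_cartesian_product[OF finN finOm]])
    from less.hyps[OF this s2PP nr2 j D(1) lt2] obtain s3 where
      s3PP: "s3 \<in> PP" and nr3: "nonred s3" and c3j: "card (s3 j D) = Suc (card (s2 j D))"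
      and c3o: "\<forall>l\<in>N. \<forall>E\<in>P l. (l,E) \<noteq> (j,D) \<longrightarrow> card (s3 l E) = card (s2 l E)"
      and cv3: "\<exists>w'\<in>Om. w' \<notin> cov s2 \<and> cov s3 = insert w' (cov s2)" by blast
    have "card (s3 i C) = Suc (card (s i C))" using c3o i C ij c2i by auto
    moreover have "\<forall>l\<in>N. \<forall>E\<in>P l. (l,E) \<noteq> (i,C) \<longrightarrow> card (s3 l E) = card (s l E)"
    proof (intro ballI impI)
      fix l E assume l: "l \<in> N" "E \<in> P l" "(l,E) \<noteq> (i,C)"
      show "card (s3 l E) = card (s l E)"
      proof (cases "(l,E) = (j,D)")
        case True then show ?thesis using c3j c2j cpos by auto
      next
        case False then show ?thesis using c3o l c2o by auto
      qed
    qed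
    ultimately show ?thesis using s3PP nr3 cv3 cov2 by auto
  qed
qed

end


context sgame
begin

definition TC where "TC s = (\<Sum>j\<in>N. \<Sum>D\<in>P j. card (s j D))"
definition TB where "TB = (\<Sum>j\<in>N. \<Sum>D\<in>P j. K j)"

lemma TC_le: "s \<in> PP \<Longrightarrow> TC s \<le> TB"
  unfolding TC_def TB_def by (intro sum_mono) (auto intro: pp_card)

lemma fill:
  assumes soc: "social_value_outweighs_cost N Om P mu K c vs" and r: "redundancy_free N Om P K r"
  shows "s \<in> PP \<Longrightarrow> nonred s \<Longrightarrow> \<exists>r'. redundancy_free N Om P K r' \<and> U s \<le> U r'"
proof (induction "TB - TC s" arbitrary: s rule: less_induct)
  case (less s)
  note sPP = less.prems(1) and nr = less.prems(2)
  show ?case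
  proof (cases "\<forall>i\<in>N. \<forall>C\<in>P i. card (s i C) = K i")
    case True then show ?thesis using sPP nr by (auto simp: rf_iff)
  next
    case False
    then obtain i C where i: "i \<in> N" and C: "C \<in> P i" and ne: "card (s i C) \<noteq> K i" by blast
    have lt: "card (s i C) < K i" using pp_card[OF sPP i C] ne by simp
    obtain s' where s'PP: "s' \<in> PP" and nr': "nonred s'" and ci: "card (s' i C) = Suc (card (s i C))"
      and co: "\<forall>j\<in>N. \<forall>D\<in>P j. (j,D) \<noteq> (i,C) \<longrightarrow> card (s' j D) = card (s j D)"
      and cv: "\<exists>w\<in>Om. w \<notin> cov s \<and> cov s' = insert w (cov s)"
      using augment[OF r sPP nr i C lt] by blast
    from cv obtain w where wOm: "w \<in> Om" and wn: "w \<notin> cov s" and cvs: "cov s' = insert w (cov s)" by blast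
    have fcov: "finite (cov s)" using finOm by (auto simp: cov_def)
    have sum1: "(\<Sum>x\<in>cov s'. mu x * vs x) = mu w * vs w + (\<Sum>x\<in>cov s. mu x * vs x)"
      using fcov wn by (simp add: cvs)
    have cost1: "cost s' = cost s + cell_mass mu C * (c i (Suc (card (s i C))) - c i (card (s i C)))"
      using cost_change[OF i C co] ci by simp
    have "c i (Suc (card (s i C))) - c i (card (s i C)) \<le> c i (K i) - c i (K i - 1)"
      by (rule c_marg[OF i lt])
    then have "cell_mass mu C * (c i (Suc (card (s i C))) - c i (card (s i C))) \<le> cell_mass mu C * (c i (K i) - c i (K i - 1))"
      using mass_pos[OF i C] by (simp add: mult_left_mono)
    also have "\<dots> \<le> mu w * vs w" using soc wOm i C by (simp add: social_value_outweighs_cost_def)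
    finally have U1: "U s \<le> U s'" by (simp add: U_eq sum1 cost1)
    have "TC s' + card (s i C) = TC s + card (s' i C)"
      unfolding TC_def by (rule dsum[OF i C co])
    then have "TC s' = Suc (TC s)" using ci by simp
    moreover have "TC s' \<le> TB" by (rule TC_le[OF s'PP])
    ultimately have "TB - TC s' < TB - TC s" by simp
    from less.hyps[OF this s'PP nr'] U1 show ?thesis by fastforce
  qed
qed

lemma opt:
  assumes soc: "social_value_outweighs_cost N Om P mu K c vs" and r: "redundancy_free N Om P K r"
    and sPP: "s \<in> PP"
  shows "\<exists>r'. redundancy_free N Om P K r' \<and> U s \<le> U r'"
proof -
  obtain s1 where "s1 \<in> PP" "nonred s1" "U s \<le> U s1" using reduce[OF sPP] by blast
  with fill[OF soc r] show ?thesis by fastforce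
qed

end


lemma exch_ineq:
  fixes a b :: "'a \<Rightarrow> real"
  assumes fS: "finite S" and fT: "finite T" and cTS: "card T \<le> card S"
    and eqab: "\<forall>y\<in>T\<inter>S. a y = b y" and ab: "\<forall>x\<in>S. \<forall>y\<in>T-S. a y \<le> b x"
    and bd: "\<forall>x\<in>S. d \<le> b x"
    and cc: "cK - cT \<le> real (card S - card T) * d"
  shows "sum a T - cT \<le> sum b S - cK"
proof -
  have sT: "sum a T = sum a (T\<inter>S) + sum a (T-S)" using sum.Int_Diff[OF fT] by blast
  have sS: "sum b S = sum b (S\<inter>T) + sum b (S-T)" using sum.Int_Diff[OF fS] by blast
  have sI: "sum a (T\<inter>S) = sum b (S\<inter>T)"
    using eqab by (simp add: Int_commute)
  define m where "m = card (S-T)"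
  define n where "n = card (T-S)"
  have cm: "m = card S - card (S\<inter>T)" unfolding m_def using fS by (simp add: card_Diff_subset_Int)
  have cn: "n = card T - card (S\<inter>T)" unfolding n_def using fT by (simp add: card_Diff_subset_Int Int_commute)
  have cI1: "card (S\<inter>T) \<le> card S" using fS by (simp add: card_mono)
  have cI2: "card (S\<inter>T) \<le> card T" using fT by (simp add: card_mono)
  have nm: "n \<le> m" using cm cn cTS cI1 cI2 by simp
  have dd: "card S - card T = m - n" using cm cn cTS cI1 cI2 by simp
  have key: "sum a (T-S) + (cK - cT) \<le> sum b (S-T)"
  proof (cases "S - T = {}")
    case True
    then have "m = 0" by (simp only: m_def card.empty)
    then have "n = 0" using nm by simp
    then have "T - S = {}" using fT unfolding n_def by (meson card_0_eq finite_Diff)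
    then show ?thesis using cc dd \<open>m = 0\<close> True by simp
  next
    case False
    define \<beta> where "\<beta> = Min (b ` (S-T))"
    have fST: "finite (S-T)" using fS by simp
    have bin: "\<beta> \<in> b ` (S-T)" unfolding \<beta>_def using False fST by simp
    have b1: "\<forall>x\<in>S-T. \<beta> \<le> b x" unfolding \<beta>_def using fST by simp
    have dle: "d \<le> \<beta>" using bin bd by auto
    have "\<forall>y\<in>T-S. a y \<le> \<beta>" using ab bin by auto
    then have A: "sum a (T-S) \<le> real n * \<beta>" unfolding n_def using sum_bounded_above[of "T-S" a \<beta>] by simp
    have B: "real m * \<beta> \<le> sum b (S-T)" unfolding m_def using sum_bounded_below[of "S-T" \<beta> b] b1 by simp
    have C: "cK - cT \<le> (real m - real n) * d" using cc dd nm by (simp add: of_nat_diff)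
    have D: "(real m - real n) * d \<le> (real m - real n) * \<beta>" using nm dle by (simp add: mult_left_mono)
    have "real n * \<beta> + (real m - real n) * \<beta> = real m * \<beta>" by (simp add: algebra_simps)
    then show ?thesis using A B C D by linarith
  qed
  show ?thesis using sT sS sI key by linarith
qed

context sgame
begin

lemma cell_sum_form:
  assumes i: "i \<in> N" and C: "C \<in> P i" and T: "T \<subseteq> C"
  shows "(\<Sum>w\<in>C. mu w * ((if w \<in> T then g w else 0) - k)) = (\<Sum>w\<in>T. mu w * g w) - cell_mass mu C * k"
proof -
  have fC: "finite C" by (rule cell_fin[OF i C])
  have "(\<Sum>w\<in>C. mu w * ((if w \<in> T then g w else 0) - k)) = (\<Sum>w\<in>C. if w \<in> T then mu w * g w else 0) - (\<Sum>w\<in>C. mu w * k)"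
    by (simp add: sum_subtractf[symmetric] right_diff_distrib) (rule sum.cong, auto)
  also have "(\<Sum>w\<in>C. if w \<in> T then mu w * g w else 0) = (\<Sum>w\<in>T. mu w * g w)"
  proof -
    have "C \<inter> T = T" using T by blast
    then show ?thesis using fC by (simp add: sum.If_cases)
  qed
  also have "(\<Sum>w\<in>C. mu w * k) = cell_mass mu C * k" by (simp add: cell_mass_def sum_distrib_right)
  finally show ?thesis .
qed

end


context sgame
begin

lemma ne_dev:
  assumes ssd: "solitary_search_dominant N P mu K c v"
    and r: "redundancy_free N Om P K r" and i: "i \<in> N" and t: "pure_strategy P K i t"
    and H1: "\<forall>C\<in>P i. \<forall>x\<in>r i C. \<forall>y\<in>C. y \<notin> cov r \<longrightarrow> mu y * v i 1 y \<le> mu x * v i 1 x"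
  shows "payoff N Om P mu c v i (r(i:=t)) \<le> payoff N Om P mu c v i r"
proof -
  have rPP: "r \<in> PP" and rK: "\<And>C. C \<in> P i \<Longrightarrow> card (r i C) = K i" and rnr: "nonred r"
    using r i by (auto simp: rf_iff)
  define s' where "s' = r(i:=t)"
  define F where "F s w = mu w * ((if searches P s i w then v i (num_searchers N P s w) w else 0)
                       - c i (card (s i (cell P i w))))" for s w
  have pay: "payoff N Om P mu c v i s = (\<Sum>C\<in>P i. \<Sum>w\<in>C. F s w)" for s
    unfolding payoff_def F_def by (rule sum_cells[OF i])
  define Oth where "Oth y = {j\<in>N. j \<noteq> i \<and> searches P r j y}" for y
  have Ofin: "finite (Oth y)" for y using finN by (simp add: Oth_def)
  have Ole1: "card (Oth y) \<le> 1" if y: "y \<in> Om" for y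
    using rnr y unfolding Oth_def nonred_def by (auto simp: card_le_Suc0_iff_eq finN)
  have Oemp: "Oth y = {}" if "y \<in> Om" "searches P r i y" for y
    using rnr that i unfolding Oth_def nonred_def by blast
  have numr: "num_searchers N P r x = 1" if "x \<in> Om" "searches P r i x" for x
  proof -
    have "{j\<in>N. searches P r j x} = {i}" using rnr that i unfolding nonred_def by auto
    then show ?thesis by (simp add: num_searchers_def)
  qed
  have numt: "num_searchers N P s' y = Suc (card (Oth y))" if y: "y \<in> Om" "searches P s' i y" for y
  proof -
    have "{j\<in>N. searches P s' j y} = insert i (Oth y)"
      using that i unfolding Oth_def s'_def searches_def by auto
    moreover have "i \<notin> Oth y" by (simp add: Oth_def)
    ultimately show ?thesis by (simp add: num_searchers_def Ofin)
  qed
  have M: "cell_mass mu C > 0" if "C \<in> P i" for C using mass_pos[OF i that] .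
  have cellbound: "(\<Sum>w\<in>C. F s' w) \<le> (\<Sum>w\<in>C. F r w)" if C: "C \<in> P i" for C
  proof -
    have tsub: "t C \<subseteq> C" and tK: "card (t C) \<le> K i" using t C by (auto simp: pure_strategy_def)
    have rsub: "r i C \<subseteq> C" by (rule pp_sub[OF rPP i C])
    have COm: "C \<subseteq> Om" by (rule cell_sub[OF i C])
    have fC: "finite C" by (rule cell_fin[OF i C])
    have ftC: "finite (t C)" using finite_subset[OF tsub fC] .
    have frC: "finite (r i C)" using finite_subset[OF rsub fC] .
    have srt: "searches P s' i w \<longleftrightarrow> w \<in> t C" if "w \<in> C" for w
      using cell_eq[OF i C that] by (simp add: s'_def searches_def)
    have srr: "searches P r i w \<longleftrightarrow> w \<in> r i C" if "w \<in> C" for w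
      using searches_cell[OF i C that] .
    have s'i: "s' i = t" by (simp add: s'_def)
    define a where "a y = mu y * v i (num_searchers N P s' y) y" for y
    define b where "b x = mu x * v i (num_searchers N P r x) x" for x
    have L: "(\<Sum>w\<in>C. F s' w) = (\<Sum>w\<in>t C. a w) - cell_mass mu C * c i (card (t C))"
    proof -
      have "(\<Sum>w\<in>C. F s' w) = (\<Sum>w\<in>C. mu w * ((if w \<in> t C then v i (num_searchers N P s' w) w else 0) - c i (card (t C))))"
        by (rule sum.cong) (auto simp: F_def srt cell_eq[OF i C] s'i)
      then show ?thesis using cell_sum_form[OF i C tsub] by (simp add: a_def)
    qed
    have R: "(\<Sum>w\<in>C. F r w) = (\<Sum>w\<in>r i C. b w) - cell_mass mu C * c i (K i)"
    proof -
      have "(\<Sum>w\<in>C. F r w) = (\<Sum>w\<in>C. mu w * ((if w \<in> r i C then v i (num_searchers N P r w) w else 0) - c i (K i)))"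
        by (rule sum.cong) (auto simp: F_def srr cell_eq[OF i C] rK[OF C])
      then show ?thesis using cell_sum_form[OF i C rsub] by (simp add: b_def)
    qed
    have b1: "b x = mu x * v i 1 x" if "x \<in> r i C" for x
    proof -
      have "x \<in> C" using that rsub by blast
      then have "num_searchers N P r x = 1" using numr[of x] that COm srr by blast
      then show ?thesis by (simp add: b_def)
    qed
    define \<Delta> where "\<Delta> = c i (K i) - c i (K i - 1)"
    have ssdC: "mu y / cell_mass mu C * v i 2 y \<le> mu x / cell_mass mu C * v i 1 x \<and>
                \<Delta> \<le> mu x / cell_mass mu C * v i 1 x" if "x \<in> C" "y \<in> C" for x y
      using ssd i C that unfolding solitary_search_dominant_def \<Delta>_def by blast
    have "sum a (t C) - cell_mass mu C * c i (card (t C)) \<le> sum b (r i C) - cell_mass mu C * c i (K i)"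
    proof (rule exch_ineq[OF frC ftC])
      show "card (t C) \<le> card (r i C)" using tK rK[OF C] by simp
      show "\<forall>y\<in>t C \<inter> r i C. a y = b y"
      proof
        fix y assume y: "y \<in> t C \<inter> r i C"
        have yC: "y \<in> C" "y \<in> Om" using y tsub COm by auto
        have "Oth y = {}" using Oemp[of y] yC srr y by auto
        then have "num_searchers N P s' y = 1" using numt[of y] yC srt y by simp
        then show "a y = b y" using b1 y by (simp add: a_def)
      qed
      show "\<forall>x\<in>r i C. \<forall>y\<in>t C - r i C. a y \<le> b x"
      proof (intro ballI)
        fix x y assume x: "x \<in> r i C" and y: "y \<in> t C - r i C"
        have yC: "y \<in> C" "y \<in> Om" using y tsub COm by auto
        have xC: "x \<in> C" using x rsub by auto
        show "a y \<le> b x"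
        proof (cases "Oth y = {}")
          case True
          then have "num_searchers N P s' y = 1" using numt[of y] yC srt y by simp
          moreover have "y \<notin> cov r"
          proof
            assume "y \<in> cov r"
            then obtain j where "j \<in> N" "searches P r j y" by (auto simp: cov_def)
            then show False using True srr[OF yC(1)] y unfolding Oth_def by (cases "j = i") auto
          qed
          ultimately show ?thesis using H1 C x yC b1[OF x] by (simp add: a_def)
        next
          case False
          then have "card (Oth y) = 1" using Ole1[OF yC(2)] Ofin[of y] by (simp add: card_gt_0_iff le_antisym Suc_leI)
          then have "num_searchers N P s' y = 2" using numt[of y] yC srt y by simp
          moreover have "mu y * v i 2 y \<le> mu x * v i 1 x"
          proof -
            have "mu y / cell_mass mu C * v i 2 y \<le> mu x / cell_mass mu C * v i 1 x" using ssdC[OF xC yC(1)] by blast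
            then show ?thesis using M[OF C] by (simp add: field_simps)
          qed
          ultimately show ?thesis using b1[OF x] by (simp add: a_def)
        qed
      qed
      show "\<forall>x\<in>r i C. cell_mass mu C * \<Delta> \<le> b x"
      proof
        fix x assume x: "x \<in> r i C"
        have xC: "x \<in> C" using x rsub by auto
        have "\<Delta> \<le> mu x / cell_mass mu C * v i 1 x" using ssdC[OF xC xC] by blast
        then show "cell_mass mu C * \<Delta> \<le> b x" using M[OF C] b1[OF x] by (simp add: field_simps)
      qed
      have "c i (K i) - c i (card (t C)) \<le> real (K i - card (t C)) * \<Delta>"
        using c_tot[OF i tK] by (simp add: \<Delta>_def)
      then have "cell_mass mu C * (c i (K i) - c i (card (t C))) \<le> cell_mass mu C * (real (K i - card (t C)) * \<Delta>)"
        using M[OF C] by (simp add: mult_left_mono)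
      then show "cell_mass mu C * c i (K i) - cell_mass mu C * c i (card (t C)) \<le> real (card (r i C) - card (t C)) * (cell_mass mu C * \<Delta>)"
        using rK[OF C] by (simp add: algebra_simps)
    qed
    then show ?thesis using L R by simp
  qed
  show ?thesis unfolding pay s'_def[symmetric] by (rule sum_mono) (rule cellbound)
qed

end


context sgame
begin

definition Phi where "Phi r = (\<Sum>j\<in>N. \<Sum>D\<in>P j. \<Sum>x\<in>r j D. mu x * v j 1 x)"

lemma H1_from_max:
  assumes oc: "ordinally_consistent N P mu v vs" and r: "redundancy_free N Om P K r"
    and maxU: "\<forall>r'. redundancy_free N Om P K r' \<longrightarrow> U r' \<le> U r"
    and maxPhi: "\<forall>r'. redundancy_free N Om P K r' \<and> U r' = U r \<longrightarrow> Phi r' \<le> Phi r"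
    and i: "i \<in> N" and C: "C \<in> P i" and x: "x \<in> r i C" and y: "y \<in> C" and yn: "y \<notin> cov r"
  shows "mu y * v i 1 y \<le> mu x * v i 1 x"
proof (rule ccontr)
  assume "\<not> ?thesis"
  then have gt: "mu x * v i 1 x < mu y * v i 1 y" by simp
  have rPP: "r \<in> PP" and rK: "\<forall>j\<in>N. \<forall>D\<in>P j. card (r j D) = K j" and rnr: "nonred r"
    using r by (auto simp: rf_iff)
  have COm: "C \<subseteq> Om" by (rule cell_sub[OF i C])
  have rsub: "r i C \<subseteq> C" by (rule pp_sub[OF rPP i C])
  have frC: "finite (r i C)" by (rule pp_fin[OF rPP i C])
  have xC: "x \<in> C" using x rsub by blast
  have xOm: "x \<in> Om" and yOm: "y \<in> Om" using xC y COm by auto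
  have yr: "y \<notin> r i C" using yn searches_cell[OF i C y, of r] yOm i by (auto simp: cov_def)
  have xy: "x \<noteq> y" using x yr by blast
  define X where "X = insert y (r i C - {x})"
  have Xsub: "X \<subseteq> C" using rsub y by (auto simp: X_def)
  have "card (r i C) > 0" using frC x card_gt_0_iff by blast
  then have cX: "card X = card (r i C)" using frC x yr xy by (simp add: X_def)
  define r' where "r' = r(i := (r i)(C := X))"
  have r'PP: "r' \<in> PP" unfolding r'_def by (rule pp_upd[OF rPP i C Xsub]) (use cX rK i C in simp)
  have srch: "searches P r' l z \<longleftrightarrow> (searches P r l z \<and> \<not> (l = i \<and> z = x)) \<or> (l = i \<and> z = y)"
    if z: "z \<in> Om" for l z
    unfolding r'_def using searches_upd[OF i C z, of r X l] searches_cell[OF i C, of z r] y xC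
    by (auto simp: X_def)
  have onlyx: "\<And>l. l \<in> N \<Longrightarrow> searches P r l x \<Longrightarrow> l = i"
    using rnr xOm i searches_cell[OF i C xC, of r] x unfolding nonred_def by blast
  have noy: "\<And>l. l \<in> N \<Longrightarrow> \<not> searches P r l y" using yn yOm by (auto simp: cov_def)
  have nr': "nonred r'" unfolding nonred_def
  proof (intro ballI impI)
    fix z l1 l2 assume z: "z \<in> Om" and l: "l1 \<in> N" "l2 \<in> N" and a: "searches P r' l1 z" "searches P r' l2 z"
    show "l1 = l2"
    proof (cases "z = y")
      case True then show ?thesis using a srch[OF z] noy l xy by auto
    next
      case False then show ?thesis using a srch[OF z] rnr z l unfolding nonred_def by auto
    qed
  qed
  have eqc: "\<forall>j\<in>N. \<forall>D\<in>P j. (j,D) \<noteq> (i,C) \<longrightarrow> card (r' j D) = card (r j D)"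
    by (auto simp: r'_def)
  have rf': "redundancy_free N Om P K r'"
    unfolding rf_iff using r'PP nr' rK eqc cX by (auto simp: r'_def)
  have cov': "cov r' = insert y (cov r - {x})"
  proof (rule set_eqI)
    fix z show "z \<in> cov r' \<longleftrightarrow> z \<in> insert y (cov r - {x})"
    proof (cases "z \<in> Om")
      case zO: True
      show ?thesis
      proof (cases "z = y")
        case True then show ?thesis using srch[OF zO] i yOm by (auto simp: cov_def)
      next
        case False
        show ?thesis
        proof (cases "z = x")
          case True then show ?thesis using srch[OF zO] onlyx xy by (auto simp: cov_def)
        next
          case False then show ?thesis using srch[OF zO] \<open>z \<noteq> y\<close> zO by (auto simp: cov_def)
        qed
      qed
    qed (use yOm in \<open>auto simp: cov_def\<close>)
  qed
  have xcov: "x \<in> cov r" using xOm i searches_cell[OF i C xC, of r] x by (auto simp: cov_def)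
  have fcov: "finite (cov r)" using finOm by (auto simp: cov_def)
  have sumcov: "(\<Sum>z\<in>cov r'. mu z * vs z) = mu y * vs y + (\<Sum>z\<in>cov r. mu z * vs z) - mu x * vs x"
    using fcov xcov yn by (simp add: cov' sum_diff1)
  have "card (r' i C) = card (r i C)" using cX by (simp add: r'_def)
  then have costeq: "cost r' = cost r" using cost_change[OF i C eqc] by simp
  have "mu x * vs x \<le> mu y * vs y" using oc i C xC y gt unfolding ordinally_consistent_def by blast
  then have "U r \<le> U r'" by (simp add: U_eq sumcov costeq)
  with maxU rf' have Ueq: "U r' = U r" by (meson order_antisym)
  have "Phi r' + (\<Sum>z\<in>r i C. mu z * v i 1 z) = Phi r + (\<Sum>z\<in>r' i C. mu z * v i 1 z)"
    unfolding Phi_def by (rule dsum[OF i C, where f = "\<lambda>j D. \<Sum>z\<in>r j D. mu z * v j 1 z"]) (auto simp: r'_def)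
  moreover have "(\<Sum>z\<in>r' i C. mu z * v i 1 z) = mu y * v i 1 y + (\<Sum>z\<in>r i C. mu z * v i 1 z) - mu x * v i 1 x"
    using frC x yr by (simp add: r'_def X_def sum_diff1)
  ultimately have "Phi r' > Phi r" using gt by simp
  moreover have "Phi r' \<le> Phi r" using maxPhi rf' Ueq by blast
  ultimately show False by simp
qed

end


theorem proposition3:
  fixes N :: "'p set" and Om :: "'w set" and P :: "'p \<Rightarrow> 'w set set"
    and mu :: "'w \<Rightarrow> real" and K :: "'p \<Rightarrow> nat" and c :: "'p \<Rightarrow> nat \<Rightarrow> real"
    and v :: "'p \<Rightarrow> nat \<Rightarrow> 'w \<Rightarrow> real" and vs :: "'w \<Rightarrow> real"
  assumes "search_game N Om P mu K c v vs"
    and "ordinally_consistent N P mu v vs"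
    and "solitary_search_dominant N P mu K c v"
    and "social_value_outweighs_cost N Om P mu K c vs"
    and "\<exists>s. redundancy_free N Om P K s"
  shows "\<exists>s\<in>pure_profiles N P K. pure_nash N Om P mu K c v s \<and>
           (\<forall>s'\<in>pure_profiles N P K. U_CI N Om P mu c vs s' \<le> U_CI N Om P mu c vs s)"
proof -
  interpret G: sgame N Om P mu K c v vs using assms(1) by (rule sgame.intro)
  define RF where "RF = {r. redundancy_free N Om P K r}"
  have RFsub: "RF \<subseteq> pure_profiles N P K" by (auto simp: RF_def redundancy_free_def)
  have fRF: "finite RF" using finite_subset[OF RFsub G.finite_PP] .
  have neRF: "RF \<noteq> {}" using assms(5) by (auto simp: RF_def)
  obtain r0 where r0: "r0 \<in> RF" and r0max: "\<forall>r\<in>RF. G.U r \<le> G.U r0"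
    using max_exists[OF fRF neRF, of G.U] by blast
  define RF' where "RF' = {r\<in>RF. G.U r = G.U r0}"
  have fRF': "finite RF'" using fRF by (simp add: RF'_def)
  have neRF': "RF' \<noteq> {}" using r0 by (auto simp: RF'_def)
  obtain s where s: "s \<in> RF'" and smax: "\<forall>r\<in>RF'. G.Phi r \<le> G.Phi s"
    using max_exists[OF fRF' neRF', of G.Phi] by blast
  have srf: "redundancy_free N Om P K s" and sU: "G.U s = G.U r0" using s by (auto simp: RF'_def RF_def)
  have sPP: "s \<in> pure_profiles N P K" using srf by (simp add: redundancy_free_def)
  have maxU: "\<forall>r'. redundancy_free N Om P K r' \<longrightarrow> G.U r' \<le> G.U s"
    using r0max sU by (auto simp: RF_def)
  have maxPhi: "\<forall>r'. redundancy_free N Om P K r' \<and> G.U r' = G.U s \<longrightarrow> G.Phi r' \<le> G.Phi s"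
    using smax sU by (auto simp: RF'_def RF_def)
  have nash: "pure_nash N Om P mu K c v s"
    unfolding pure_nash_def
  proof (intro conjI ballI allI impI)
    show "s \<in> pure_profiles N P K" by (rule sPP)
    fix i t assume i: "i \<in> N" and t: "pure_strategy P K i t"
    have H1: "\<forall>C\<in>P i. \<forall>x\<in>s i C. \<forall>y\<in>C. y \<notin> G.cov s \<longrightarrow> mu y * v i 1 y \<le> mu x * v i 1 x"
      using G.H1_from_max[OF assms(2) srf maxU maxPhi i] by blast
    show "payoff N Om P mu c v i (s(i := t)) \<le> payoff N Om P mu c v i s"
      by (rule G.ne_dev[OF assms(3) srf i t H1])
  qed
  have "\<forall>s'\<in>pure_profiles N P K. G.U s' \<le> G.U s"
  proof
    fix s' assume "s' \<in> pure_profiles N P K"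
    then obtain r' where "redundancy_free N Om P K r'" "G.U s' \<le> G.U r'"
      using G.opt[OF assms(4) srf] by blast
    then show "G.U s' \<le> G.U s" using maxU by (meson order_trans)
  qed
  then show ?thesis using sPP nash by blast
qed


end
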